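(* Let $X$ be an integrable random variable, $N\sim\mathcal{N}(0,1)$ independent of $X$, $Y=X+N$. For $y\in\mathbb{R}$ and $k\in\mathbb{N}$ let $f(y)=\mathbb{E}[X\mid Y=y]$ and $g_k(y)=\mathbb{E}[(X-\mathbb{E}[X\mid Y])^k\mid Y=y]$, and for $\boldsymbol{\lambda}=(\lambda_2,\dots,\lambda_\ell)$ let $\boldsymbol{g}^{\boldsymbol{\lambda}}=\prod_{i=2}^\ell g_i^{\lambda_i}$. Then for every integer $r\ge2$, $$f^{(r-1)}=\sum_{\boldsymbol{\lambda}\in\Pi_r}e_{\boldsymbol{\lambda}}\,\boldsymbol{g}^{\boldsymbol{\lambda}}.$$
   Context: Conditional expectations given $Y=y$ are the smooth versions $\mathbb{E}[Z\mid Y=y]=\mathbb{E}[Ze^{-(X-y)^2/2}]/\mathbb{E}[e^{-(X-y)^2/2}]$ for $Z$ a polynomial in $X$ with $y$-dependent coefficients. $\Pi_r$ is the set of integer partitions of $r$ into parts each $\ge2$, encoded by multiplicities $\boldsymbol{\lambda}=(\lambda_2,\dots,\lambda_\ell)$ with $2\lambda_2+\dots+\ell\lambda_\ell=r$; for $m=\lambda_2+\dots+\lambda_\ell$, $c_{\boldsymbol{\lambda}}=\frac1m\binom{m}{\lambda_2,\dots,\lambda_\ell}\binom{r}{2,\dots,2;\dots;\ell,\dots,\ell}$ (the second multinomial has $\lambda_k$ entries equal to $k$) and $e_{\boldsymbol{\lambda}}=(-1)^{m-1}c_{\boldsymbol{\lambda}}$. *)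

theory Defs
  imports "HOL-Probability.Probability"
begin

text \<open>Smooth version of E[Z | Y = y] for Y = X + N, N standard normal independent of X:
  E[Z(X,y) exp(-(X-y)^2/2)] / E[exp(-(X-y)^2/2)].\<close>
definition smooth_cexp :: "'a measure \<Rightarrow> ('a \<Rightarrow> real) \<Rightarrow> (real \<Rightarrow> real \<Rightarrow> real) \<Rightarrow> real \<Rightarrow> real" where
  "smooth_cexp P X Z y =
     (\<integral>\<omega>. Z (X \<omega>) y * exp (- ((X \<omega> - y)^2) / 2) \<partial>P) / (\<integral>\<omega>. exp (- ((X \<omega> - y)^2) / 2) \<partial>P)"

definition post_mean :: "'a measure \<Rightarrow> ('a \<Rightarrow> real) \<Rightarrow> real \<Rightarrow> real" where
  "post_mean P X y = smooth_cexp P X (\<lambda>x _. x) y"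

definition post_cmom :: "'a measure \<Rightarrow> ('a \<Rightarrow> real) \<Rightarrow> nat \<Rightarrow> real \<Rightarrow> real" where
  "post_cmom P X k y = smooth_cexp P X (\<lambda>x y. (x - post_mean P X y) ^ k) y"

text \<open>Partitions of r into parts \<ge> 2, encoded by multiplicity functions lam (lam k = number of parts equal to k).\<close>
definition Pi_part :: "nat \<Rightarrow> (nat \<Rightarrow> nat) set" where
  "Pi_part r = {lam. (\<forall>k. lam k \<noteq> 0 \<longrightarrow> 2 \<le> k \<and> k \<le> r) \<and> (\<Sum>k=2..r. k * lam k) = r}"

definition part_len :: "nat \<Rightarrow> (nat \<Rightarrow> nat) \<Rightarrow> nat" where
  "part_len r lam = (\<Sum>k=2..r. lam k)"

definition part_c :: "nat \<Rightarrow> (nat \<Rightarrow> nat) \<Rightarrow> real" where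
  "part_c r lam = (1 / real (part_len r lam))
      * (fact (part_len r lam) / (\<Prod>k=2..r. fact (lam k)))
      * (fact r / (\<Prod>k=2..r. (fact k) ^ (lam k)))"

definition part_e :: "nat \<Rightarrow> (nat \<Rightarrow> nat) \<Rightarrow> real" where
  "part_e r lam = (-1) ^ (part_len r lam - 1) * part_c r lam"

end

theory Submission
  imports Defs "HOL-Computational_Algebra.Formal_Power_Series"
begin
unbundle no vec_syntax unbundle fps_syntax


definition fps_der :: "(real \<Rightarrow> real fps) \<Rightarrow> real fps \<Rightarrow> real \<Rightarrow> bool" where
  "fps_der U V y0 \<longleftrightarrow> (\<forall>n. ((\<lambda>y. U y $ n) has_real_derivative (V $ n)) (at y0))"

lemma fps_der_const: "fps_der (\<lambda>y. c) 0 y0"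
  by (simp add: fps_der_def)

lemma fps_der_add: "fps_der U V y0 \<Longrightarrow> fps_der W V' y0 \<Longrightarrow> fps_der (\<lambda>y. U y + W y) (V + V') y0"
  by (auto simp: fps_der_def intro!: derivative_eq_intros)

lemma fps_der_diff: "fps_der U V y0 \<Longrightarrow> fps_der W V' y0 \<Longrightarrow> fps_der (\<lambda>y. U y - W y) (V - V') y0"
  by (auto simp: fps_der_def intro!: derivative_eq_intros)

lemma fps_der_mult:
  assumes "fps_der U V y0" "fps_der W V' y0"
  shows "fps_der (\<lambda>y. U y * W y) (V * W y0 + U y0 * V') y0"
  unfolding fps_der_def
proof
  fix n
  have "((\<lambda>y. \<Sum>i=0..n. U y $ i * W y $ (n - i)) has_real_derivative
        (\<Sum>i=0..n. V $ i * W y0 $ (n - i) + U y0 $ i * V' $ (n - i))) (at y0)"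
    using assms unfolding fps_der_def
    by (intro DERIV_sum) (auto intro!: derivative_eq_intros)
  then show "((\<lambda>y. (U y * W y) $ n) has_real_derivative (V * W y0 + U y0 * V') $ n) (at y0)"
    by (simp add: fps_mult_nth sum.distrib)
qed

lemma fps_der_sum:
  assumes "finite A" "\<And>i. i \<in> A \<Longrightarrow> fps_der (U i) (V i) y0"
  shows "fps_der (\<lambda>y. \<Sum>i\<in>A. U i y) (\<Sum>i\<in>A. V i) y0"
  using assms unfolding fps_der_def
  by (auto simp: fps_sum_nth intro!: DERIV_sum)

lemma fps_der_power:
  assumes "fps_der U V y0"
  shows "fps_der (\<lambda>y. U y ^ i) (of_nat i * U y0 ^ (i - 1) * V) y0"
proof (induction i)
  case 0
  then show ?case using fps_der_const[of 1] by simp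
next
  case (Suc i)
  have "fps_der (\<lambda>y. U y * U y ^ i) (V * U y0 ^ i + U y0 * (of_nat i * U y0 ^ (i - 1) * V)) y0"
    by (rule fps_der_mult[OF assms Suc])
  moreover have "V * U y0 ^ i + U y0 * (of_nat i * U y0 ^ (i - 1) * V) = of_nat (Suc i) * U y0 ^ (Suc i - 1) * V"
  proof (cases i)
    case 0 then show ?thesis by simp
  next
    case (Suc j) then show ?thesis by (simp add: algebra_simps)
  qed
  ultimately show ?case by simp
qed

lemma fps_der_cmult:
  assumes "fps_der U V y0"
  shows "fps_der (\<lambda>y. fps_const c * U y) (fps_const c * V) y0"
  using assms unfolding fps_der_def by (auto intro!: derivative_eq_intros)

lemma fps_der_cong:
  "fps_der U V y0 \<Longrightarrow> V = V' \<Longrightarrow> fps_der U V' y0" by simp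

lemma compose_trunc:
  fixes a b :: "'a::comm_ring_1 fps"
  assumes b0: "b $ 0 = 0" and mN: "m \<le> N"
  shows "(a oo b) $ m = (\<Sum>i=0..N. fps_const (a $ i) * b ^ i) $ m"
proof -
  have "(\<Sum>i=0..N. fps_const (a $ i) * b ^ i) $ m = (\<Sum>i=0..N. a $ i * (b ^ i) $ m)"
    by (simp add: fps_sum_nth)
  also have "\<dots> = (\<Sum>i=0..m. a $ i * (b ^ i) $ m)"
  proof (rule sum.mono_neutral_right)
    show "\<forall>i\<in>{0..N} - {0..m}. a $ i * (b ^ i) $ m = 0"
      using startsby_zero_power_prefix[OF b0] by auto
  qed (use mN in auto)
  finally show ?thesis by (simp add: fps_compose_nth)
qed

lemma fps_der_compose:
  assumes "fps_der U V y0" "\<And>y. U y $ 0 = 0"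
  shows "fps_der (\<lambda>y. a oo U y) ((fps_deriv a oo U y0) * V) y0"
  unfolding fps_der_def
proof
  fix n
  let ?P = "\<lambda>y. \<Sum>i=0..Suc n. fps_const (a $ i) * U y ^ i"
  have d: "fps_der ?P (\<Sum>i=0..Suc n. fps_const (a $ i) * (of_nat i * U y0 ^ (i - 1) * V)) y0"
    by (intro fps_der_sum fps_der_cmult fps_der_power assms) auto
  have eq1: "(a oo U y) $ n = ?P y $ n" for y
    by (rule compose_trunc[OF assms(2)]) auto
  let ?Q = "\<Sum>i=0..n. fps_const ((fps_deriv a) $ i) * U y0 ^ i"
  have eq2: "(\<Sum>i=0..Suc n. fps_const (a $ i) * (of_nat i * U y0 ^ (i - 1) * V)) = ?Q * V"
  proof -
    have "(\<Sum>i=0..Suc n. fps_const (a $ i) * (of_nat i * U y0 ^ (i - 1) * V))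
        = (\<Sum>i=Suc 0..Suc n. fps_const (a $ i) * (of_nat i * U y0 ^ (i - 1) * V))"
      by (rule sum.mono_neutral_right) auto
    also have "\<dots> = (\<Sum>i=0..n. fps_const (a $ Suc i) * (of_nat (Suc i) * U y0 ^ i * V))"
      by (simp only: sum.shift_bounds_cl_Suc_ivl diff_Suc_1)
    also have "\<dots> = (\<Sum>i=0..n. fps_const ((fps_deriv a) $ i) * U y0 ^ i * V)"
    proof (intro sum.cong refl)
      fix i
      have "fps_const ((fps_deriv a) $ i) = fps_const (a $ Suc i) * fps_const (of_nat (Suc i))"
        by (simp only: fps_deriv_nth fps_const_mult mult.commute Suc_eq_plus1)
      also have "\<dots> = fps_const (a $ Suc i) * of_nat (Suc i)"
        by (simp only: fps_of_nat)
      finally have "fps_const ((fps_deriv a) $ i) = fps_const (a $ Suc i) * of_nat (Suc i)" .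
      then show "fps_const (a $ Suc i) * (of_nat (Suc i) * U y0 ^ i * V) = fps_const ((fps_deriv a) $ i) * U y0 ^ i * V"
        by (simp add: algebra_simps)
    qed
    also have "\<dots> = ?Q * V"
      by (simp add: sum_distrib_right)
    finally show ?thesis .
  qed
  have eq3: "((fps_deriv a oo U y0) * V) $ n = (?Q * V) $ n"
    unfolding fps_mult_nth
    by (intro sum.cong refl, subst compose_trunc[OF assms(2), of _ n]) auto
  show "((\<lambda>y. (a oo U y) $ n) has_real_derivative ((fps_deriv a oo U y0) * V) $ n) (at y0)"
    using d unfolding fps_der_def eq2 eq3 eq1 by blast
qed


definition Qset :: "nat \<Rightarrow> nat \<Rightarrow> nat \<Rightarrow> (nat \<Rightarrow> nat) set" where
  "Qset N m r = {lam. (\<forall>k. lam k \<noteq> 0 \<longrightarrow> 2 \<le> k \<and> k \<le> N) \<and> (\<Sum>k=2..N. k * lam k) = r \<and> (\<Sum>k=2..N. lam k) = m}"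

lemma QsetI: "(\<forall>k. lam k \<noteq> 0 \<longrightarrow> 2 \<le> k \<and> k \<le> N) \<Longrightarrow> (\<Sum>k=2..N. k * lam k) = r \<Longrightarrow> (\<Sum>k=2..N. lam k) = m \<Longrightarrow> lam \<in> Qset N m r"
  unfolding Qset_def mem_Collect_eq by blast

lemma QsetD:
  assumes "lam \<in> Qset N m r"
  shows "\<forall>k. lam k \<noteq> 0 \<longrightarrow> 2 \<le> k \<and> k \<le> N" "(\<Sum>k=2..N. k * lam k) = r" "(\<Sum>k=2..N. lam k) = m"
  using assms unfolding Qset_def mem_Collect_eq by blast+

definition Fterm :: "(nat \<Rightarrow> real) \<Rightarrow> nat \<Rightarrow> nat \<Rightarrow> (nat \<Rightarrow> nat) \<Rightarrow> real" where
  "Fterm a N m lam = fact m / (\<Prod>k=2..N. fact (lam k)) * (\<Prod>k=2..N. a k ^ lam k)"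

lemma Qset_finite: "finite (Qset N m r)"
proof -
  have "Qset N m r \<subseteq> {f. \<forall>x. (x \<in> {2..N} \<longrightarrow> f x \<in> {0..r}) \<and> (x \<notin> {2..N} \<longrightarrow> f x = 0)}"
  proof safe
    fix lam x assume l: "lam \<in> Qset N m r" and x: "x \<in> {2..N}"
    have "lam x \<le> x * lam x" using x by simp
    also have "\<dots> \<le> (\<Sum>k=2..N. k * lam k)" using x by (intro member_le_sum) auto
    finally show "lam x \<in> {0..r}" using l by (simp add: Qset_def)
  next
    fix lam x assume "lam \<in> Qset N m r" "x \<notin> {2..N}"
    then show "lam x = 0" by (auto simp: Qset_def)
  qed
  then show ?thesis by (rule finite_subset) (intro finite_set_of_finite_funs; simp)
qed

lemma sum_upd:
  fixes \<phi> :: "nat \<Rightarrow> nat \<Rightarrow> 'b::comm_monoid_add"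
  assumes "finite A" "k \<in> A"
  shows "(\<Sum>j\<in>A. \<phi> j ((g(k:=v)) j)) + \<phi> k (g k) = (\<Sum>j\<in>A. \<phi> j (g j)) + \<phi> k v"
proof -
  have "(\<Sum>j\<in>A. \<phi> j ((g(k:=v)) j)) = \<phi> k v + (\<Sum>j\<in>A-{k}. \<phi> j (g j))"
    using assms by (simp add: sum.remove)
  moreover have "(\<Sum>j\<in>A. \<phi> j (g j)) = \<phi> k (g k) + (\<Sum>j\<in>A-{k}. \<phi> j (g j))"
    using assms by (simp add: sum.remove)
  ultimately show ?thesis by (simp add: ac_simps)
qed

lemma prod_upd:
  fixes \<phi> :: "nat \<Rightarrow> nat \<Rightarrow> 'b::comm_monoid_mult"
  assumes "finite A" "k \<in> A"
  shows "(\<Prod>j\<in>A. \<phi> j ((g(k:=v)) j)) * \<phi> k (g k) = (\<Prod>j\<in>A. \<phi> j (g j)) * \<phi> k v"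
proof -
  have "(\<Prod>j\<in>A. \<phi> j ((g(k:=v)) j)) = \<phi> k v * (\<Prod>j\<in>A-{k}. \<phi> j (g j))"
    using assms by (simp add: prod.remove)
  moreover have "(\<Prod>j\<in>A. \<phi> j (g j)) = \<phi> k (g k) * (\<Prod>j\<in>A-{k}. \<phi> j (g j))"
    using assms by (simp add: prod.remove)
  ultimately show ?thesis by (simp add: ac_simps)
qed

lemma Fterm_step:
  assumes lam: "lam \<in> Qset N (Suc m) r"
  shows "(\<Sum>k\<in>{k\<in>{2..N}. lam k > 0}. a k * Fterm a N m (lam(k := lam k - 1))) = Fterm a N (Suc m) lam"
proof -
  let ?D = "\<Prod>k=2..N. fact (lam k) :: real"
  let ?M = "\<Prod>k=2..N. a k ^ lam k"
  have D0: "?D \<noteq> 0" by (simp add: prod_zero_iff)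
  have trm: "a k * Fterm a N m (lam(k := lam k - 1)) = fact m * real (lam k) / ?D * ?M"
    if k: "k \<in> {2..N}" "lam k > 0" for k
  proof -
    have p1: "(\<Prod>j=2..N. fact ((lam(k := lam k - 1)) j) :: real) * fact (lam k) = ?D * fact (lam k - 1)"
      using prod_upd[of "{2..N}" k "\<lambda>j x. fact x :: real" lam "lam k - 1"] k by simp
    obtain j where j: "lam k = Suc j" using k(2) gr0_implies_Suc by blast
    have "fact (lam k) = real (lam k) * (fact (lam k - 1) :: real)"
      unfolding j by simp
    then have p1': "(\<Prod>j=2..N. fact ((lam(k := lam k - 1)) j) :: real) * real (lam k) = ?D"
    proof -
      have "(\<Prod>j=2..N. fact ((lam(k := lam k - 1)) j) :: real) * real (lam k) * fact (lam k - 1) = ?D * fact (lam k - 1)"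
        using p1 \<open>fact (lam k) = _\<close> by (simp add: mult.assoc)
      then show ?thesis by simp
    qed
    have p2: "(\<Prod>j=2..N. a j ^ ((lam(k := lam k - 1)) j)) * a k ^ lam k = ?M * a k ^ (lam k - 1)"
      using prod_upd[of "{2..N}" k "\<lambda>j x. a j ^ x" lam "lam k - 1"] k by simp
    have p2': "a k * (\<Prod>j=2..N. a j ^ ((lam(k := lam k - 1)) j)) = ?M"
    proof -
      have e: "(\<Prod>j=2..N. a j ^ ((lam(k := lam k - 1)) j)) = a k ^ (lam k - 1) * (\<Prod>j\<in>{2..N}-{k}. a j ^ lam j)"
      proof -
        have "(\<Prod>j=2..N. a j ^ ((lam(k := lam k - 1)) j)) = a k ^ (lam k - 1) * (\<Prod>j\<in>{2..N}-{k}. a j ^ ((lam(k := lam k - 1)) j))"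
          using k by (subst prod.remove[of _ k]) auto
        also have "(\<Prod>j\<in>{2..N}-{k}. a j ^ ((lam(k := lam k - 1)) j)) = (\<Prod>j\<in>{2..N}-{k}. a j ^ lam j)"
          by (intro prod.cong) auto
        finally show ?thesis .
      qed
      have "?M = a k ^ lam k * (\<Prod>j\<in>{2..N}-{k}. a j ^ lam j)"
        using k by (simp add: prod.remove)
      moreover have "a k ^ lam k = a k * a k ^ (lam k - 1)" unfolding j by simp
      ultimately show ?thesis by (simp only: e mult.assoc)
    qed
    show ?thesis
      unfolding Fterm_def using p1' p2' D0
      by (auto simp: field_simps)
  qed
  have "(\<Sum>k\<in>{k\<in>{2..N}. lam k > 0}. a k * Fterm a N m (lam(k := lam k - 1)))
      = (\<Sum>k\<in>{k\<in>{2..N}. lam k > 0}. fact m * real (lam k) / ?D * ?M)"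
    by (intro sum.cong refl trm) auto
  also have "\<dots> = fact m / ?D * ?M * (\<Sum>k\<in>{k\<in>{2..N}. lam k > 0}. real (lam k))"
    by (simp add: sum_distrib_left sum_distrib_right field_simps)
  also have "(\<Sum>k\<in>{k\<in>{2..N}. lam k > 0}. real (lam k)) = (\<Sum>k=2..N. real (lam k))"
    by (rule sum.mono_neutral_left) auto
  also have "\<dots> = real (Suc m)" using QsetD(3)[OF lam] by (simp flip: of_nat_sum)
  finally show ?thesis by (simp add: Fterm_def field_simps)
qed

lemma Qset_0: "Qset N 0 r = (if r = 0 then {\<lambda>_. 0} else {})"
proof -
  have "lam \<in> Qset N 0 r \<longleftrightarrow> r = 0 \<and> lam = (\<lambda>_. 0)" for lam
  proof
    assume l: "lam \<in> Qset N 0 r"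
    have l1: "\<forall>k. lam k \<noteq> 0 \<longrightarrow> 2 \<le> k \<and> k \<le> N" and l2: "(\<Sum>k=2..N. k * lam k) = r"
      and l3: "(\<Sum>k=2..N. lam k) = 0" using l unfolding Qset_def mem_Collect_eq by blast+
    have z: "\<forall>k\<in>{2..N}. lam k = 0" using l3 by (subst (asm) sum_eq_0_iff) auto
    have "lam k = 0" for k
      using l1 z by (metis atLeastAtMost_iff)
    then have lz: "lam = (\<lambda>_. 0)" by (rule ext)
    have "r = 0" using l2 unfolding lz by simp
    with lz show "r = 0 \<and> lam = (\<lambda>_. 0)" by simp
  next
    assume "r = 0 \<and> lam = (\<lambda>_. 0)"
    then show "lam \<in> Qset N 0 r" unfolding Qset_def by simp
  qed
  then show ?thesis by (cases "r = 0") auto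
qed

lemma multinomial_fps:
  fixes U :: "real fps"
  assumes U0: "U $ 0 = 0" and U1: "U $ 1 = 0"
  shows "r \<le> N \<Longrightarrow> (U ^ m) $ r = (\<Sum>lam\<in>Qset N m r. Fterm (\<lambda>k. U $ k) N m lam)"
proof (induction m arbitrary: r)
  case 0
  show ?case by (simp add: Qset_0 Fterm_def)
next
  case (Suc m)
  let ?a = "\<lambda>k. U $ k"
  let ?S = "Sigma {2..r} (\<lambda>i. Qset N m (r - i))"
  let ?T = "Sigma (Qset N (Suc m) r) (\<lambda>lam. {k\<in>{2..N}. lam k > 0})"
  have "(U ^ Suc m) $ r = (\<Sum>i=0..r. ?a i * (U ^ m) $ (r - i))"
    by (simp add: fps_mult_nth)
  also have "\<dots> = (\<Sum>i=2..r. ?a i * (U ^ m) $ (r - i))"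
  proof (rule sum.mono_neutral_right)
    show "\<forall>i\<in>{0..r} - {2..r}. ?a i * (U ^ m) $ (r - i) = 0"
    proof
      fix i assume "i \<in> {0..r} - {2..r}"
      then have "i = 0 \<or> i = 1" by auto
      then show "?a i * (U ^ m) $ (r - i) = 0" using U0 U1 by auto
    qed
  qed auto
  also have "\<dots> = (\<Sum>i=2..r. \<Sum>mu\<in>Qset N m (r - i). ?a i * Fterm ?a N m mu)"
    using Suc by (simp add: sum_distrib_left)
  also have "\<dots> = (\<Sum>(i, mu)\<in>?S. ?a i * Fterm ?a N m mu)"
    by (rule sum.Sigma) (auto simp: Qset_finite)
  also have "\<dots> = (\<Sum>(lam, k)\<in>?T. ?a k * Fterm ?a N m (lam(k := lam k - 1)))"
  proof (rule sum.reindex_bij_witness[where i = "\<lambda>(lam, k). (k, lam(k := lam k - 1))"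
        and j = "\<lambda>(i, mu). (mu(i := mu i + 1), i)"])
    fix p assume "p \<in> ?S"
    then obtain i mu where p: "p = (i, mu)" and i: "2 \<le> i" "i \<le> r" and mu: "mu \<in> Qset N m (r - i)"
      by auto
    let ?l = "mu(i := mu i + 1)"
    show "(case case p of (i, mu) \<Rightarrow> (mu(i := mu i + 1), i) of (lam, k) \<Rightarrow> (k, lam(k := lam k - 1))) = p"
      using p by auto
    show "(case case p of (i, mu) \<Rightarrow> (mu(i := mu i + 1), i) of (lam, k) \<Rightarrow> ?a k * Fterm ?a N m (lam(k := lam k - 1))) = (case p of (i, mu) \<Rightarrow> ?a i * Fterm ?a N m mu)"
      using p by simp
    have iN: "i \<in> {2..N}" using i Suc.prems by auto
    have s1: "(\<Sum>k=2..N. k * ?l k) + i * mu i = (\<Sum>k=2..N. k * mu k) + i * (mu i + 1)"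
      using sum_upd[of "{2..N}" i "\<lambda>k x. k * x" mu "mu i + 1"] iN by simp
    have s2: "(\<Sum>k=2..N. ?l k) + mu i = (\<Sum>k=2..N. mu k) + (mu i + 1)"
      using sum_upd[of "{2..N}" i "\<lambda>k x. x" mu "mu i + 1"] iN by simp
    have "?l \<in> Qset N (Suc m) r"
    proof (rule QsetI)
      show "\<forall>k. ?l k \<noteq> 0 \<longrightarrow> 2 \<le> k \<and> k \<le> N" using QsetD(1)[OF mu] iN by auto
      show "(\<Sum>k=2..N. k * ?l k) = r" using QsetD(2)[OF mu] s1 i by (simp add: algebra_simps)
      show "(\<Sum>k=2..N. ?l k) = Suc m" using QsetD(3)[OF mu] s2 by simp
    qed
    then show "(case p of (i, mu) \<Rightarrow> (mu(i := mu i + 1), i)) \<in> ?T"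
      using p iN by auto
  next
    fix q assume "q \<in> ?T"
    then obtain lam k where q: "q = (lam, k)" and lam: "lam \<in> Qset N (Suc m) r" and k: "k \<in> {2..N}" "lam k > 0"
      by auto
    let ?m = "lam(k := lam k - 1)"
    show "(case case q of (lam, k) \<Rightarrow> (k, lam(k := lam k - 1)) of (i, mu) \<Rightarrow> (mu(i := mu i + 1), i)) = q"
      using q k by auto
    have "k * 1 \<le> k * lam k" using k by (intro mult_left_mono) auto
    also have "\<dots> \<le> (\<Sum>j=2..N. j * lam j)" using k by (intro member_le_sum) auto
    finally have kr: "k \<le> r" using QsetD(2)[OF lam] by simp
    have s1: "(\<Sum>j=2..N. j * ?m j) + k * lam k = (\<Sum>j=2..N. j * lam j) + k * (lam k - 1)"
      using sum_upd[of "{2..N}" k "\<lambda>k x. k * x" lam "lam k - 1"] k by simp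
    have s2: "(\<Sum>j=2..N. ?m j) + lam k = (\<Sum>j=2..N. lam j) + (lam k - 1)"
      using sum_upd[of "{2..N}" k "\<lambda>k x. x" lam "lam k - 1"] k by simp
    have e1: "k * lam k = k * (lam k - 1) + k" using k by (cases "lam k") auto
    have "?m \<in> Qset N m (r - k)"
    proof (rule QsetI)
      show "\<forall>j. ?m j \<noteq> 0 \<longrightarrow> 2 \<le> j \<and> j \<le> N" using QsetD(1)[OF lam] by auto
      show "(\<Sum>j=2..N. j * ?m j) = r - k" using QsetD(2)[OF lam] s1 e1 by simp
      show "(\<Sum>j=2..N. ?m j) = m" using QsetD(3)[OF lam] s2 k by simp
    qed
    then show "(case q of (lam, k) \<Rightarrow> (k, lam(k := lam k - 1))) \<in> ?S"
      using q k kr by auto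
  qed
  also have "\<dots> = (\<Sum>lam\<in>Qset N (Suc m) r. \<Sum>k\<in>{k\<in>{2..N}. lam k > 0}. ?a k * Fterm ?a N m (lam(k := lam k - 1)))"
    by (rule sum.Sigma[symmetric]) (auto simp: Qset_finite)
  also have "\<dots> = (\<Sum>lam\<in>Qset N (Suc m) r. Fterm ?a N (Suc m) lam)"
    by (intro sum.cong refl Fterm_step)
  finally show ?case .
qed



lemma Pi_part_group: "{lam \<in> Pi_part r. part_len r lam = i} = Qset r i r"
  unfolding Pi_part_def part_len_def Qset_def by blast

lemma Pi_part_finite: "finite (Pi_part r)"
proof -
  have "Pi_part r = (\<Union>i\<in>{0..r}. Qset r i r)"
  proof safe
    fix lam assume l: "lam \<in> Pi_part r"
    have "(\<Sum>k=2..r. lam k) \<le> (\<Sum>k=2..r. k * lam k)" by (intro sum_mono) auto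
    also have "\<dots> = r" using l unfolding Pi_part_def by blast
    finally have "part_len r lam \<in> {0..r}" unfolding part_len_def by simp
    moreover have "lam \<in> Qset r (part_len r lam) r" using l Pi_part_group[of r "part_len r lam"] by blast
    ultimately show "lam \<in> (\<Union>i\<in>{0..r}. Qset r i r)" by blast
  next
    fix lam i assume "lam \<in> Qset r i r"
    then show "lam \<in> Pi_part r" using Pi_part_group[of r i] by blast
  qed
  then show ?thesis using Qset_finite by simp
qed

lemma log_formula:
  fixes U :: "real fps"
  assumes U0: "U $ 0 = 0" and U1: "U $ 1 = 0" and Ug: "\<And>k. 2 \<le> k \<Longrightarrow> U $ k = g k / fact k"
    and r: "2 \<le> r"
  shows "fact r * (fps_ln 1 oo U) $ r = (\<Sum>lam\<in>Pi_part r. part_e r lam * (\<Prod>k=2..r. g k ^ lam k))"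
proof -
  let ?G = "\<lambda>lam. part_e r lam * (\<Prod>k=2..r. g k ^ lam k)"
  have img: "part_len r ` Pi_part r \<subseteq> {0..r}"
  proof
    fix i assume "i \<in> part_len r ` Pi_part r"
    then obtain lam where l: "lam \<in> Pi_part r" and i: "i = part_len r lam" by blast
    have "(\<Sum>k=2..r. lam k) \<le> (\<Sum>k=2..r. k * lam k)" by (intro sum_mono) auto
    also have "\<dots> = r" using l unfolding Pi_part_def by blast
    finally show "i \<in> {0..r}" unfolding i part_len_def by simp
  qed
  have "(\<Sum>lam\<in>Pi_part r. ?G lam) = (\<Sum>i=0..r. \<Sum>lam\<in>{lam \<in> Pi_part r. part_len r lam = i}. ?G lam)"
    by (rule sum.group[symmetric, OF Pi_part_finite _ img]) simp
  also have "\<dots> = (\<Sum>i=0..r. \<Sum>lam\<in>Qset r i r. ?G lam)"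
    by (simp only: Pi_part_group)
  also have "\<dots> = (\<Sum>i=0..r. fact r * (fps_ln 1 $ i * (U ^ i) $ r))"
  proof (intro sum.cong refl)
    fix i assume "i \<in> {0..r}"
    show "(\<Sum>lam\<in>Qset r i r. ?G lam) = fact r * (fps_ln 1 $ i * (U ^ i) $ r)"
    proof (cases "i = 0")
      case True
      then show ?thesis using r by (simp add: Qset_0)
    next
      case False
      have "fact r * (fps_ln 1 $ i * (U ^ i) $ r) = (\<Sum>lam\<in>Qset r i r. fact r * (fps_ln 1 $ i * Fterm (\<lambda>k. U $ k) r i lam))"
        by (simp add: multinomial_fps[OF U0 U1 order_refl] sum_distrib_left)
      also have "\<dots> = (\<Sum>lam\<in>Qset r i r. ?G lam)"
      proof (intro sum.cong refl)
        fix lam assume l: "lam \<in> Qset r i r"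
        have pl: "part_len r lam = i" using QsetD(3)[OF l] unfolding part_len_def .
        have pw: "(\<Prod>k=2..r. (U $ k) ^ lam k) = (\<Prod>k=2..r. g k ^ lam k) / (\<Prod>k=2..r. fact k ^ lam k)"
          by (simp add: Ug power_divide prod_dividef)
        have nz1: "(\<Prod>k=2..r. fact (lam k) :: real) \<noteq> 0" by (simp add: prod_zero_iff)
        have nz2: "(\<Prod>k=2..r. fact k ^ lam k :: real) \<noteq> 0" by (simp add: prod_zero_iff)
        show "fact r * (fps_ln 1 $ i * Fterm (\<lambda>k. U $ k) r i lam) = ?G lam"
          unfolding Fterm_def part_e_def part_c_def pl pw fps_ln_nth using False nz1 nz2
          by (simp add: field_simps)
      qed
      finally show ?thesis by simp
    qed
  qed
  also have "\<dots> = fact r * (fps_ln 1 oo U) $ r"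
    by (simp add: fps_compose_nth sum_distrib_left)
  finally show ?thesis by simp
qed


declare One_nat_def[simp del]

definition Mf :: "(nat \<Rightarrow> real \<Rightarrow> real) \<Rightarrow> real \<Rightarrow> real fps" where
  "Mf m y = Abs_fps (\<lambda>n. m n y / fact n)"
definition Cf :: "(nat \<Rightarrow> real \<Rightarrow> real) \<Rightarrow> real \<Rightarrow> real fps" where
  "Cf m y = Mf m y * fps_exp (- m 1 y)"
definition Kf :: "(nat \<Rightarrow> real \<Rightarrow> real) \<Rightarrow> real \<Rightarrow> real fps" where
  "Kf m y = fps_ln 1 oo (Cf m y - 1)"
definition gf :: "(nat \<Rightarrow> real \<Rightarrow> real) \<Rightarrow> nat \<Rightarrow> real \<Rightarrow> real" where
  "gf m k y = (\<Sum>j=0..k. real (k choose j) * (- m 1 y) ^ (k - j) * m j y)"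

lemma Cf_nth: "Cf m y $ k = gf m k y / fact k"
proof -
  have "Cf m y $ k = (\<Sum>j=0..k. m j y / fact j * ((- m 1 y) ^ (k - j) / fact (k - j)))"
    by (simp add: Cf_def Mf_def fps_mult_nth)
  also have "\<dots> = (\<Sum>j=0..k. real (k choose j) * (- m 1 y) ^ (k - j) * m j y / fact k)"
    by (intro sum.cong refl) (simp add: binomial_fact field_simps)
  also have "\<dots> = gf m k y / fact k" by (simp add: gf_def sum_divide_distrib)
  finally show ?thesis .
qed

context
  fixes m :: "nat \<Rightarrow> real \<Rightarrow> real"
  assumes m0: "\<And>y. m 0 y = 1"
    and dm: "\<And>n y. (m n has_real_derivative (m (Suc n) y - m n y * m 1 y)) (at y)"
begin

lemma g0: "gf m 0 y = 1" by (simp add: gf_def m0)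
lemma g1: "gf m 1 y = 0" by (simp add: gf_def m0 One_nat_def)
lemma g2: "gf m 2 y = m 2 y - m 1 y ^ 2"
  by (simp add: gf_def m0 numeral_2_eq_2 power2_eq_square algebra_simps One_nat_def)

lemma f_deriv: "(m 1 has_real_derivative gf m 2 y) (at y)"
  using dm[of 1 y] unfolding g2 by (simp add: power2_eq_square numeral_2_eq_2 del: One_nat_def)

lemma C0: "Cf m y $ 0 = 1" by (simp add: Cf_nth g0)
lemma C1: "Cf m y $ 1 = 0" by (simp add: Cf_nth g1)

lemma dM: "fps_der (Mf m) (fps_deriv (Mf m y0) - fps_const (m 1 y0) * Mf m y0) y0"
  unfolding fps_der_def
proof
  fix n
  have "((\<lambda>y. m n y / fact n) has_real_derivative ((m (Suc n) y0 - m n y0 * m 1 y0) / fact n)) (at y0)"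
    using dm[of n y0] by (rule DERIV_cdivide)
  moreover have "(m (Suc n) y0 - m n y0 * m 1 y0) / fact n
      = (fps_deriv (Mf m y0) - fps_const (m 1 y0) * Mf m y0) $ n"
  proof -
    have a: "(fps_deriv (Mf m y0)) $ n = of_nat (Suc n) * (m (Suc n) y0 / fact (Suc n))"
      by (simp only: fps_deriv_nth Mf_def fps_nth_Abs_fps Suc_eq_plus1)
    have b: "of_nat (Suc n) * (x / fact (Suc n)) = (x / fact n :: real)" for x
      by (simp add: fact_Suc divide_simps del: of_nat_Suc)
    have "(fps_deriv (Mf m y0)) $ n = m (Suc n) y0 / fact n" using a b[of "m (Suc n) y0"] by (simp only:)
    then show ?thesis by (simp add: Mf_def field_simps)
  qed
  ultimately show "((\<lambda>y. Mf m y $ n) has_real_derivative (fps_deriv (Mf m y0) - fps_const (m 1 y0) * Mf m y0) $ n) (at y0)"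
    by (simp add: Mf_def)
qed

lemma dE: "fps_der (\<lambda>y. fps_exp (- m 1 y)) (- (fps_const (gf m 2 y0) * fps_X * fps_exp (- m 1 y0))) y0"
  unfolding fps_der_def
proof
  fix n
  have d0: "((\<lambda>y. - m 1 y) has_real_derivative - gf m 2 y0) (at y0)"
    by (rule DERIV_minus[OF f_deriv])
  have d: "((\<lambda>y. (- m 1 y) ^ n / fact n) has_real_derivative
      (of_nat n * (- m 1 y0) ^ (n - Suc 0) * (- gf m 2 y0) / fact n)) (at y0)"
    using DERIV_cdivide[OF DERIV_power[OF d0], of n "fact n"] by (simp add: ac_simps)
  have "of_nat n * (- m 1 y0) ^ (n - Suc 0) * (- gf m 2 y0) / fact n
      = (- (fps_const (gf m 2 y0) * fps_X * fps_exp (- m 1 y0))) $ n"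
  proof (cases n)
    case 0 then show ?thesis by simp
  next
    case (Suc k)
    then show ?thesis by (simp add: mult.assoc field_simps One_nat_def del: of_nat_Suc)
  qed
  with d show "((\<lambda>y. fps_exp (- m 1 y) $ n) has_real_derivative (- (fps_const (gf m 2 y0) * fps_X * fps_exp (- m 1 y0))) $ n) (at y0)"
    by simp
qed

lemma dC: "fps_der (Cf m) (fps_deriv (Cf m y0) - fps_const (gf m 2 y0) * fps_X * Cf m y0) y0"
proof -
  have der: "fps_der (\<lambda>y. Mf m y * fps_exp (- m 1 y))
     ((fps_deriv (Mf m y0) - fps_const (m 1 y0) * Mf m y0) * fps_exp (- m 1 y0)
      + Mf m y0 * (- (fps_const (gf m 2 y0) * fps_X * fps_exp (- m 1 y0)))) y0"
    by (rule fps_der_mult[OF dM dE])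
  have eq: "(fps_deriv (Mf m y0) - fps_const (m 1 y0) * Mf m y0) * fps_exp (- m 1 y0)
      + Mf m y0 * (- (fps_const (gf m 2 y0) * fps_X * fps_exp (- m 1 y0)))
      = fps_deriv (Cf m y0) - fps_const (gf m 2 y0) * fps_X * Cf m y0"
    by (simp add: Cf_def algebra_simps fps_const_neg[symmetric] del: fps_const_neg)
  have cf: "Cf m = (\<lambda>y. Mf m y * fps_exp (- m 1 y))" by (rule ext) (simp add: Cf_def)
  show ?thesis using fps_der_cong[OF der eq] unfolding fps_der_def Cf_def .
qed

lemma dK: "fps_der (Kf m) (fps_deriv (Kf m y0) - fps_const (gf m 2 y0) * fps_X) y0"
proof -
  let ?U = "\<lambda>y. Cf m y - 1"
  let ?D = "fps_deriv (Cf m y0) - fps_const (gf m 2 y0) * fps_X * Cf m y0"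
  have dU: "fps_der ?U ?D y0"
    using fps_der_diff[OF dC fps_der_const[of 1]] by simp
  have U0: "?U y $ 0 = 0" for y by (simp add: C0)
  let ?I = "inverse (1 + fps_X) oo ?U y0"
  have d1: "fps_der (Kf m) ((fps_deriv (fps_ln 1) oo ?U y0) * ?D) y0"
    unfolding Kf_def by (rule fps_der_compose[OF dU U0])
  have fl: "fps_deriv (fps_ln (1::real)) = inverse (1 + fps_X)"
    by (simp add: fps_ln_deriv)
  have IC: "?I * Cf m y0 = 1"
  proof -
    have "(1 + fps_X) oo ?U y0 = Cf m y0"
      using U0 by (simp add: fps_compose_add_distrib)
    moreover have "(inverse (1 + fps_X) * (1 + fps_X)) oo ?U y0 = ?I * ((1 + fps_X) oo ?U y0)"
      by (rule fps_compose_mult_distrib[OF U0])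
    moreover have "inverse (1 + fps_X) * (1 + fps_X) = (1 :: real fps)"
      by (rule inverse_mult_eq_1) simp
    ultimately show ?thesis by simp
  qed
  have dK0: "fps_deriv (Kf m y0) = ?I * fps_deriv (Cf m y0)"
    unfolding Kf_def using fps_compose_deriv[OF U0[of y0], of "fps_ln 1"] fl by simp
  have "(fps_deriv (fps_ln 1) oo ?U y0) * ?D = fps_deriv (Kf m y0) - fps_const (gf m 2 y0) * fps_X"
    unfolding fl dK0 using IC by (simp add: algebra_simps)
  with d1 show ?thesis by simp
qed

definition kap :: "nat \<Rightarrow> real \<Rightarrow> real" where "kap r y = fact r * Kf m y $ r"

lemma kap_deriv:
  assumes "2 \<le> r"
  shows "(kap r has_real_derivative kap (Suc r) y) (at y)"
proof -
  have "((\<lambda>y. Kf m y $ r) has_real_derivative (fps_deriv (Kf m y) - fps_const (gf m 2 y) * fps_X) $ r) (at y)"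
    using dK[of y] unfolding fps_der_def by blast
  then have "((\<lambda>y. fact r * Kf m y $ r) has_real_derivative fact r * ((fps_deriv (Kf m y) - fps_const (gf m 2 y) * fps_X) $ r)) (at y)"
    by (intro derivative_eq_intros) auto
  moreover have "fact r * ((fps_deriv (Kf m y) - fps_const (gf m 2 y) * fps_X) $ r) = kap (Suc r) y"
  proof -
    have "(fps_deriv (Kf m y) - fps_const (gf m 2 y) * fps_X) $ r = of_nat (Suc r) * Kf m y $ Suc r"
      using assms by (simp add: fps_sub_nth mult.commute[of "fps_const _" fps_X]) (simp add: Suc_eq_plus1 ac_simps)
    then show ?thesis by (simp add: kap_def fact_Suc del: of_nat_Suc)
  qed
  ultimately show ?thesis unfolding kap_def by (simp only:)
qed

lemma kap2: "kap 2 y = gf m 2 y"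
proof -
  let ?U = "Cf m y - 1"
  have "(?U ^ 2) $ 2 = 0"
  proof -
    have c1: "Cf m y $ Suc 0 = 0" using C1 by (simp add: One_nat_def)
    show ?thesis by (simp add: power2_eq_square fps_mult_nth numeral_2_eq_2 C0 c1 sum.atLeast0_atMost_Suc)
  qed
  then show ?thesis
    by (simp add: kap_def Kf_def fps_compose_nth numeral_2_eq_2 Cf_nth C0 fps_ln_nth)
qed

end


definition wt :: "real \<Rightarrow> real \<Rightarrow> real" where "wt x y = exp (x * y - x^2 / 2)"

definition Am :: "'a measure \<Rightarrow> ('a \<Rightarrow> real) \<Rightarrow> nat \<Rightarrow> real \<Rightarrow> real" where
  "Am P X n y = (\<integral>\<omega>. X \<omega> ^ n * wt (X \<omega>) y \<partial>P)"

lemma pow_le_fact_exp: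
  fixes t :: real assumes "0 \<le> t"
  shows "t ^ k \<le> fact k * exp t"
proof -
  obtain s where "\<bar>s\<bar> \<le> \<bar>t\<bar>" and e: "exp t = (\<Sum>m<Suc k. t ^ m / fact m) + exp s / fact (Suc k) * t ^ Suc k"
    using Maclaurin_exp_le[of t "Suc k"] by blast
  have "t ^ k / fact k \<le> (\<Sum>m<Suc k. t ^ m / fact m)"
    using assms by (intro member_le_sum) auto
  also have "\<dots> \<le> exp t" unfolding e using assms by simp
  finally show ?thesis by (simp add: field_simps)
qed

lemma exp_taylor2_bound:
  fixes a :: real
  shows "\<bar>exp a - 1 - a\<bar> \<le> a^2 * exp \<bar>a\<bar>"
proof -
  obtain t where t: "\<bar>t\<bar> \<le> \<bar>a\<bar>" and e: "exp a = (\<Sum>m<2. a ^ m / fact m) + exp t / fact 2 * a ^ 2"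
    using Maclaurin_exp_le[of a 2] by blast
  have e2: "exp a - 1 - a = exp t / 2 * a^2" using e by (simp add: numeral_2_eq_2)
  have "\<bar>exp a - 1 - a\<bar> = exp t / 2 * a^2" unfolding e2 by (rule abs_of_nonneg) simp
  also have "\<dots> \<le> exp \<bar>a\<bar> * a^2"
  proof (intro mult_right_mono)
    have "exp t \<le> exp \<bar>a\<bar>" using t by simp
    then show "exp t / 2 \<le> exp \<bar>a\<bar>" using exp_gt_zero[of t] by linarith
  qed simp
  finally show ?thesis by (simp add: mult.commute)
qed

lemma pow_gauss_bound:
  fixes x c :: real assumes c: "0 \<le> c"
  shows "\<bar>x\<bar> ^ k * exp (c * \<bar>x\<bar> - x^2 / 2) \<le> fact k * exp ((c + 1)^2 / 2)"
proof -
  have "\<bar>x\<bar> ^ k * exp (c * \<bar>x\<bar> - x^2 / 2) \<le> fact k * exp \<bar>x\<bar> * exp (c * \<bar>x\<bar> - x^2 / 2)"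
    by (intro mult_right_mono pow_le_fact_exp) auto
  also have "\<dots> = fact k * exp ((c + 1) * \<bar>x\<bar> - x^2 / 2)"
    by (simp add: mult.assoc flip: exp_add) (simp add: algebra_simps)
  also have "\<dots> \<le> fact k * exp ((c + 1)^2 / 2)"
  proof -
    have "0 \<le> ((c + 1) - \<bar>x\<bar>)^2" by simp
    then have "(c + 1) * \<bar>x\<bar> - x^2 / 2 \<le> (c + 1)^2 / 2"
      by (simp add: power2_eq_square algebra_simps)
    then show ?thesis by simp
  qed
  finally show ?thesis .
qed

lemma wt_bound: "\<bar>x ^ n * wt x y\<bar> \<le> fact n * exp ((\<bar>y\<bar> + 1)^2 / 2)"
proof -
  have "\<bar>x ^ n * wt x y\<bar> = \<bar>x\<bar> ^ n * exp (x * y - x^2 / 2)"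
    by (simp add: wt_def abs_mult power_abs)
  also have "\<dots> \<le> \<bar>x\<bar> ^ n * exp (\<bar>y\<bar> * \<bar>x\<bar> - x^2 / 2)"
  proof -
    have "x * y \<le> \<bar>y\<bar> * \<bar>x\<bar>" by (metis abs_ge_self abs_mult mult.commute)
    then show ?thesis by (intro mult_left_mono) auto
  qed
  also have "\<dots> \<le> fact n * exp ((\<bar>y\<bar> + 1)^2 / 2)" by (rule pow_gauss_bound) simp
  finally show ?thesis .
qed

lemma wt_diff_bound:
  assumes h: "\<bar>h\<bar> \<le> 1"
  shows "\<bar>x ^ n * wt x (y + h) - x ^ n * wt x y - h * (x ^ Suc n * wt x y)\<bar>
    \<le> h^2 * (fact (n + 2) * exp ((\<bar>y\<bar> + 2)^2 / 2))"
proof -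
  have wh: "wt x (y + h) = wt x y * exp (x * h)"
    by (simp add: wt_def algebra_simps flip: exp_add)
  have "x ^ n * wt x (y + h) - x ^ n * wt x y - h * (x ^ Suc n * wt x y)
      = x ^ n * wt x y * (exp (x * h) - 1 - x * h)"
    unfolding wh by (simp add: algebra_simps)
  then have "\<bar>x ^ n * wt x (y + h) - x ^ n * wt x y - h * (x ^ Suc n * wt x y)\<bar>
      = \<bar>x\<bar> ^ n * wt x y * \<bar>exp (x * h) - 1 - x * h\<bar>"
    by (simp add: abs_mult power_abs wt_def)
  also have "\<dots> \<le> \<bar>x\<bar> ^ n * wt x y * ((x * h)^2 * exp \<bar>x * h\<bar>)"
    by (intro mult_left_mono exp_taylor2_bound) (auto simp: wt_def)
  also have "\<dots> \<le> \<bar>x\<bar> ^ n * wt x y * ((x * h)^2 * exp \<bar>x\<bar>)"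
  proof -
    have "\<bar>x * h\<bar> \<le> \<bar>x\<bar>" using h by (simp add: abs_mult mult_left_le)
    then show ?thesis by (intro mult_left_mono) (auto simp: wt_def)
  qed
  also have "\<dots> = h^2 * (\<bar>x\<bar> ^ (n + 2) * exp (x * y - x^2 / 2 + \<bar>x\<bar>))"
    by (simp add: wt_def exp_add power_add power_mult_distrib mult_ac power2_eq_square)
  also have "\<dots> \<le> h^2 * (\<bar>x\<bar> ^ (n + 2) * exp ((\<bar>y\<bar> + 1) * \<bar>x\<bar> - x^2 / 2))"
  proof -
    have "x * y \<le> \<bar>y\<bar> * \<bar>x\<bar>" by (metis abs_ge_self abs_mult mult.commute)
    then have "x * y - x^2 / 2 + \<bar>x\<bar> \<le> (\<bar>y\<bar> + 1) * \<bar>x\<bar> - x^2 / 2" by (simp add: algebra_simps)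
    then show ?thesis by (intro mult_left_mono) auto
  qed
  also have "\<dots> \<le> h^2 * (fact (n + 2) * exp ((\<bar>y\<bar> + 1 + 1)^2 / 2))"
    by (intro mult_left_mono pow_gauss_bound) auto
  finally show ?thesis by (simp add: add.assoc)
qed

lemma DERIV_quad_bound:
  fixes F :: "real \<Rightarrow> real"
  assumes "\<And>h. \<bar>h\<bar> \<le> 1 \<Longrightarrow> \<bar>F (y + h) - F y - h * D\<bar> \<le> B * h^2"
  shows "(F has_real_derivative D) (at y)"
proof -
  have "((\<lambda>h. (F (y + h) - F y) / h - D) \<longlongrightarrow> 0) (at 0)"
  proof (rule Lim_null_comparison)
    show "\<forall>\<^sub>F h in at 0. norm ((F (y + h) - F y) / h - D) \<le> \<bar>B\<bar> * \<bar>h\<bar>"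
      unfolding eventually_at
    proof (intro exI[of _ 1] conjI ballI impI)
      fix h :: real assume "h \<noteq> 0 \<and> dist h 0 < 1"
      then have h0: "h \<noteq> 0" and h1: "\<bar>h\<bar> \<le> 1" by auto
      have "(F (y + h) - F y) / h - D = (F (y + h) - F y - h * D) / h" using h0 by (simp add: field_simps)
      then have "norm ((F (y + h) - F y) / h - D) = \<bar>F (y + h) - F y - h * D\<bar> / \<bar>h\<bar>" by simp
      also have "\<dots> \<le> B * h^2 / \<bar>h\<bar>" using assms[OF h1] h0 by (intro divide_right_mono) auto
      also have "\<dots> = B * \<bar>h\<bar>" using h0 by (cases "h > 0") (auto simp: power2_eq_square field_simps)
      also have "\<dots> \<le> \<bar>B\<bar> * \<bar>h\<bar>" by (intro mult_right_mono) auto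
      finally show "norm ((F (y + h) - F y) / h - D) \<le> \<bar>B\<bar> * \<bar>h\<bar>" .
    qed simp
    have "((\<lambda>h. \<bar>B\<bar> * \<bar>h\<bar>) \<longlongrightarrow> \<bar>B\<bar> * \<bar>0::real\<bar>) (at 0)"
      by (intro tendsto_intros)
    then show "((\<lambda>h. \<bar>B\<bar> * \<bar>h\<bar>) \<longlongrightarrow> 0) (at 0)" by simp
  qed
  then have "((\<lambda>h. (F (y + h) - F y) / h) \<longlongrightarrow> D) (at 0)" by (rule LIM_zero_cancel)
  then show ?thesis by (simp add: DERIV_def)
qed

context prob_space
begin

lemma wt_integrable:
  assumes [measurable]: "X \<in> borel_measurable M"
  shows "integrable M (\<lambda>\<omega>. X \<omega> ^ n * wt (X \<omega>) y)"
proof (rule integrable_const_bound[where B = "fact n * exp ((\<bar>y\<bar> + 1)^2 / 2)"])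
  show "AE x in M. norm (X x ^ n * wt (X x) y) \<le> fact n * exp ((\<bar>y\<bar> + 1)^2 / 2)"
    using wt_bound by simp
  show "(\<lambda>\<omega>. X \<omega> ^ n * wt (X \<omega>) y) \<in> borel_measurable M"
    unfolding wt_def by measurable
qed

lemma Am_deriv:
  assumes [measurable]: "X \<in> borel_measurable M"
  shows "(Am M X n has_real_derivative Am M X (Suc n) y) (at y)"
proof (rule DERIV_quad_bound[where B = "fact (n + 2) * exp ((\<bar>y\<bar> + 2)^2 / 2)"])
  fix h :: real assume h: "\<bar>h\<bar> \<le> 1"
  let ?B = "fact (n + 2) * exp ((\<bar>y\<bar> + 2)^2 / 2)"
  let ?f = "\<lambda>\<omega>. X \<omega> ^ n * wt (X \<omega>) (y + h) - X \<omega> ^ n * wt (X \<omega>) y - h * (X \<omega> ^ Suc n * wt (X \<omega>) y)"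
  have i: "integrable M ?f"
    by (intro Bochner_Integration.integrable_diff integrable_mult_right wt_integrable[OF assms])
  have eq: "Am M X n (y + h) - Am M X n y - h * Am M X (Suc n) y = (\<integral>\<omega>. ?f \<omega> \<partial>M)"
    unfolding Am_def using wt_integrable[OF assms, of n "y+h"] wt_integrable[OF assms, of n y] wt_integrable[OF assms, of "Suc n" y]
    by (simp del: power_Suc)
  have b: "AE \<omega> in M. \<bar>?f \<omega>\<bar> \<le> h^2 * ?B"
    using wt_diff_bound[OF h] by simp
  have "(\<integral>\<omega>. ?f \<omega> \<partial>M) \<le> h^2 * ?B"
  proof (rule integral_le_const[OF i])
    show "AE \<omega> in M. ?f \<omega> \<le> h^2 * ?B" using b by eventually_elim auto
  qed
  moreover have "- (\<integral>\<omega>. ?f \<omega> \<partial>M) \<le> h^2 * ?B"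
  proof -
    have "(\<integral>\<omega>. - ?f \<omega> \<partial>M) \<le> h^2 * ?B"
    proof (rule integral_le_const[OF integrable_minus[OF i]])
      show "AE \<omega> in M. - ?f \<omega> \<le> h^2 * ?B" using b by eventually_elim auto
    qed
    then show ?thesis by (simp only: integral_minus)
  qed
  ultimately show "\<bar>Am M X n (y + h) - Am M X n y - h * Am M X (Suc n) y\<bar> \<le> ?B * h^2"
    unfolding eq by (simp add: mult.commute)
qed

lemma Am0_pos:
  assumes [measurable]: "X \<in> borel_measurable M"
  shows "0 < Am M X 0 y"
proof -
  have i: "integrable M (\<lambda>\<omega>. wt (X \<omega>) y)" using wt_integrable[OF assms, of 0 y] by simp
  have nn: "0 \<le> Am M X 0 y" unfolding Am_def by (intro integral_nonneg_AE) (simp add: wt_def)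
  moreover have "Am M X 0 y \<noteq> 0"
  proof
    assume "Am M X 0 y = 0"
    then have "AE \<omega> in M. wt (X \<omega>) y = 0"
      using integral_nonneg_eq_0_iff_AE[OF i] by (simp add: Am_def wt_def)
    then have "AE \<omega> in M. False" by (simp add: wt_def)
    then show False by (simp add: AE_False)
  qed
  ultimately show ?thesis by simp
qed

end


context prob_space
begin

definition mom :: "('a \<Rightarrow> real) \<Rightarrow> nat \<Rightarrow> real \<Rightarrow> real" where
  "mom X n y = Am M X n y / Am M X 0 y"

lemma mom0:
  assumes [measurable]: "X \<in> borel_measurable M"
  shows "mom X 0 y = 1"
  using Am0_pos[OF assms, of y] by (simp add: mom_def)

lemma mom_deriv:
  assumes [measurable]: "X \<in> borel_measurable M"
  shows "(mom X n has_real_derivative (mom X (Suc n) y - mom X n y * mom X 1 y)) (at y)"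
proof -
  have p: "Am M X 0 y \<noteq> 0" using Am0_pos[OF assms, of y] by simp
  have "((\<lambda>y. Am M X n y / Am M X 0 y) has_real_derivative
      (Am M X (Suc n) y * Am M X 0 y - Am M X n y * Am M X (Suc 0) y) / (Am M X 0 y * Am M X 0 y)) (at y)"
    by (rule DERIV_divide[OF Am_deriv[OF assms] Am_deriv[OF assms] p])
  moreover have "(Am M X (Suc n) y * Am M X 0 y - Am M X n y * Am M X (Suc 0) y) / (Am M X 0 y * Am M X 0 y)
      = mom X (Suc n) y - mom X n y * mom X 1 y"
    using p by (simp add: mom_def field_simps One_nat_def)
  ultimately show ?thesis unfolding mom_def[abs_def] by simp
qed

lemma smooth_cexp_eq:
  assumes [measurable]: "X \<in> borel_measurable M"
  shows "smooth_cexp M X Z y = (\<integral>\<omega>. Z (X \<omega>) y * wt (X \<omega>) y \<partial>M) / Am M X 0 y"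
proof -
  have w: "exp (- ((x - y)^2) / 2) = wt x y * exp (- (y^2) / 2)" for x
    by (simp add: wt_def power2_eq_square field_simps flip: exp_add)
  have "smooth_cexp M X Z y = ((\<integral>\<omega>. Z (X \<omega>) y * wt (X \<omega>) y \<partial>M) * exp (- (y^2) / 2))
        / (Am M X 0 y * exp (- (y^2) / 2))"
    unfolding smooth_cexp_def w Am_def by (simp only: mult.assoc[symmetric] integral_mult_left_zero power_0 mult_1_left)
  then show ?thesis by simp
qed

lemma post_mean_eq:
  assumes [measurable]: "X \<in> borel_measurable M"
  shows "post_mean M X y = mom X 1 y"
  unfolding post_mean_def smooth_cexp_eq[OF assms] mom_def Am_def by simp

lemma post_cmom_eq:
  assumes [measurable]: "X \<in> borel_measurable M"
  shows "post_cmom M X k y = gf (mom X) k y"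
proof -
  let ?f = "mom X 1 y"
  have "(\<integral>\<omega>. (X \<omega> - post_mean M X y) ^ k * wt (X \<omega>) y \<partial>M)
      = (\<integral>\<omega>. (\<Sum>j=0..k. real (k choose j) * (- ?f) ^ (k - j) * (X \<omega> ^ j * wt (X \<omega>) y)) \<partial>M)"
  proof (intro Bochner_Integration.integral_cong refl)
    fix \<omega>
    have "(X \<omega> - ?f) ^ k = (X \<omega> + (- ?f)) ^ k" by simp
    also have "\<dots> = (\<Sum>j\<le>k. real (k choose j) * X \<omega> ^ j * (- ?f) ^ (k - j))"
      by (rule binomial_ring)
    finally show "(X \<omega> - post_mean M X y) ^ k * wt (X \<omega>) y
        = (\<Sum>j=0..k. real (k choose j) * (- ?f) ^ (k - j) * (X \<omega> ^ j * wt (X \<omega>) y))"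
      unfolding post_mean_eq[OF assms] by (simp add: sum_distrib_right sum_distrib_left atLeast0AtMost ac_simps)
  qed
  also have "\<dots> = (\<Sum>j=0..k. real (k choose j) * (- ?f) ^ (k - j) * Am M X j y)"
    unfolding Am_def
    by (simp add: wt_integrable[OF assms])
  finally have e: "(\<integral>\<omega>. (X \<omega> - post_mean M X y) ^ k * wt (X \<omega>) y \<partial>M)
      = (\<Sum>j=0..k. real (k choose j) * (- ?f) ^ (k - j) * Am M X j y)" .
  show ?thesis
    unfolding post_cmom_def smooth_cexp_eq[OF assms] e gf_def mom_def
    by (simp add: sum_divide_distrib)
qed

end



lemma main_aux:
  fixes P :: "'a measure" and X :: "'a \<Rightarrow> real"
  assumes ps: "prob_space P" and Xm: "X \<in> borel_measurable P" and r: "r \<ge> 2"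
  shows "((deriv ^^ (r - 2)) (post_mean P X) has_real_derivative
           (\<Sum>lam\<in>Pi_part r. part_e r lam * (\<Prod>k=2..r. post_cmom P X k y ^ lam k))) (at y)"
proof -
  interpret prob_space P by (rule ps)
  let ?m = "mom X"
  have m0: "\<And>y. ?m 0 y = 1" by (rule mom0[OF Xm])
  have dm: "\<And>n y. (?m n has_real_derivative (?m (Suc n) y - ?m n y * ?m 1 y)) (at y)"
    by (rule mom_deriv[OF Xm])
  have pm: "post_mean P X = ?m 1" by (rule ext) (rule post_mean_eq[OF Xm])
  have IH: "((deriv ^^ n) (?m 1) has_real_derivative kap ?m (n + 2) y) (at y)" for n y
  proof (induction n arbitrary: y)
    case 0
    show ?case using f_deriv[OF m0 dm, of y] kap2[OF m0 dm, of y] by (simp add: numeral_2_eq_2)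
  next
    case (Suc n)
    have "(deriv ^^ Suc n) (?m 1) = (\<lambda>y. kap ?m (n + 2) y)"
      using Suc.IH by (auto intro!: ext DERIV_imp_deriv)
    then show ?case using kap_deriv[OF m0 dm, of "n + 2" y] by simp
  qed
  have "((deriv ^^ (r - 2)) (post_mean P X) has_real_derivative kap ?m r y) (at y)"
  proof -
    have "r - 2 + 2 = r" using r by simp
    then show ?thesis using IH[of "r - 2" y] unfolding pm by (simp only:)
  qed
  moreover have "kap ?m r y = (\<Sum>lam\<in>Pi_part r. part_e r lam * (\<Prod>k=2..r. post_cmom P X k y ^ lam k))"
  proof -
    let ?U = "Cf ?m y - 1"
    have k1: "kap ?m r y = fact r * Kf ?m y $ r" by (rule kap_def[OF m0 dm])
    have k2: "Kf ?m y = fps_ln 1 oo ?U" by (rule Kf_def)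
    have "kap ?m r y = fact r * (fps_ln 1 oo ?U) $ r" unfolding k1 k2 ..
    also have "\<dots> = (\<Sum>lam\<in>Pi_part r. part_e r lam * (\<Prod>k=2..r. gf ?m k y ^ lam k))"
    proof (rule log_formula)
      show "?U $ 0 = 0" using C0[OF m0 dm] by simp
      show "?U $ 1 = 0" using C1[OF m0 dm] by simp
      show "?U $ k = gf ?m k y / fact k" if "2 \<le> k" for k using that by (simp add: Cf_nth)
    qed (rule r)
    also have "\<dots> = (\<Sum>lam\<in>Pi_part r. part_e r lam * (\<Prod>k=2..r. post_cmom P X k y ^ lam k))"
      by (simp add: post_cmom_eq[OF Xm])
    finally show ?thesis .
  qed
  ultimately show ?thesis by simp
qed

theorem proposition6p2:
  fixes P :: "'a measure" and X N :: "'a \<Rightarrow> real" and r :: nat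
  assumes "prob_space P"
    and "X \<in> borel_measurable P" and "integrable P X"
    and "distributed P lborel N std_normal_density"
    and "prob_space.indep_var P borel X borel N"
    and "r \<ge> 2"
  shows "\<forall>y::real. (((deriv ^^ (r - 2)) (post_mean P X)) has_real_derivative
           (\<Sum>lam\<in>Pi_part r. part_e r lam * (\<Prod>k=2..r. post_cmom P X k y ^ lam k))) (at y)"
  using main_aux[OF assms(1,2,6)] by blast


end
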